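(* Let $(B_k,\delta_k)_{k\ge1}$ be a sequence with $\delta_k\in(0,1/4)$, $B_k\ge1$ and $B_k/\log(\delta_k^{-1})\to\infty$. Then \[ d_{B_k;\delta_k}(e^{-x})\ge\big(\tfrac12+o(1)\big)\sqrt{B_k\log\big((2\delta_k)^{-1}\big)}\qquad(k\to\infty). \]
   Context: For real $B\ge1$, $\delta\in(0,1)$ and a function $f:[0,B]\to\mathbb{R}$, $d_{B;\delta}(f)$ denotes the minimum degree of a non-constant real polynomial $p$ satisfying $\sup_{x\in[0,B]}|p(x)-f(x)|<\delta$. Logarithms are natural. *)

theory Defs
  imports "HOL-Analysis.Analysis" "HOL-Computational_Algebra.Polynomial"
begin

definition approx_degree :: "real \<Rightarrow> real \<Rightarrow> (real \<Rightarrow> real) \<Rightarrow> nat" where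
  "approx_degree B \<delta> f =
     (LEAST n. \<exists>p :: real poly. degree p = n \<and> 0 < degree p \<and>
        (SUP x\<in>{0..B}. \<bar>poly p x - f x\<bar>) < \<delta>)"

end

theory Submission
  imports Defs
begin


fun cheb :: "nat \<Rightarrow> real poly" where
  "cheb 0 = 1"
| "cheb (Suc 0) = [:0,1:]"
| "cheb (Suc (Suc n)) = smult 2 [:0,1:] * cheb (Suc n) - cheb n"

lemma cheb_deg: "degree (cheb n) \<le> n"
proof (induction n rule: cheb.induct)
  case (3 n)
  have "degree (smult 2 [:0,1:] * cheb (Suc n)) \<le> Suc (Suc n)"
    by (rule order.trans[OF degree_mult_le]) (use 3 in auto)
  moreover have "degree (cheb n) \<le> Suc (Suc n)" using 3 by simp
  ultimately show ?case by (simp add: degree_diff_le)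
qed auto

lemma cheb_cos: "poly (cheb n) (cos x) = cos (real n * x)"
proof (induction n rule: cheb.induct)
  case (3 n)
  define a where "a = real (Suc n) * x"
  have e1: "cos (real (Suc (Suc n)) * x) = cos (a + x)" by (simp add: a_def algebra_simps)
  have e2: "cos (real n * x) = cos (a - x)" by (simp add: a_def algebra_simps)
  have "poly (cheb (Suc (Suc n))) (cos x) = 2 * cos x * cos a - cos (a - x)"
    using 3 e2 by (simp add: a_def)
  also have "\<dots> = cos (a + x)" by (simp add: cos_add cos_diff algebra_simps)
  finally show ?case using e1 by simp
qed auto

lemma cheb_cosh: "poly (cheb n) (cosh x) = cosh (real n * x)"
proof (induction n rule: cheb.induct)
  case (3 n)
  define a where "a = real (Suc n) * x"
  have e1: "cosh (real (Suc (Suc n)) * x) = cosh (a + x)" by (simp add: a_def algebra_simps)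
  have e2: "cosh (real n * x) = cosh (a - x)" by (simp add: a_def algebra_simps)
  have "poly (cheb (Suc (Suc n))) (cosh x) = 2 * cosh x * cosh a - cosh (a - x)"
    using 3 e2 by (simp add: a_def)
  also have "\<dots> = cosh (a + x)" by (simp add: cosh_add cosh_diff algebra_simps)
  finally show ?case using e1 by simp
qed auto

definition lag :: "(nat \<Rightarrow> real) \<Rightarrow> nat \<Rightarrow> nat \<Rightarrow> real \<Rightarrow> real" where
  "lag c n j y = (\<Prod>i\<in>{..n}-{j}. (y - c i) / (c j - c i))"

lemma lagrange_interp:
  fixes c :: "nat \<Rightarrow> real" and q :: "real poly"
  assumes inj: "inj_on c {..n}" and deg: "degree q \<le> n"
  shows "poly q y = (\<Sum>j\<le>n. poly q (c j) * lag c n j y)"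
proof -
  define L where "L j = smult (\<Prod>i\<in>{..n}-{j}. 1 / (c j - c i)) (\<Prod>i\<in>{..n}-{j}. [:- c i, 1:])" for j
  define Q where "Q = (\<Sum>j\<le>n. smult (poly q (c j)) (L j))"
  have polyL: "poly (L j) y = lag c n j y" for j y
    by (simp add: L_def lag_def poly_prod prod.distrib[symmetric] divide_simps)
  have degL: "degree (L j) \<le> n" if "j \<le> n" for j
  proof -
    have "degree (\<Prod>i\<in>{..n}-{j}. [:- c i, 1:]) \<le> (\<Sum>i\<in>{..n}-{j}. degree [:- c i, 1:])"
      using degree_prod_sum_le[of "{..n}-{j}" "\<lambda>i. [:- c i, 1:]"] by (simp add: o_def)
    also have "\<dots> = n" using that by simp
    finally show ?thesis unfolding L_def using degree_smult_le order.trans by blast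
  qed
  have degQ: "degree Q \<le> n"
    unfolding Q_def
    by (rule degree_sum_le) (use degL degree_smult_le order.trans in auto)
  have lagk: "lag c n j (c k) = (if k = j then 1 else 0)" if "j \<le> n" "k \<le> n" for j k
  proof (cases "k = j")
    case True
    have "\<And>i. i \<in> {..n}-{j} \<Longrightarrow> c j - c i \<noteq> 0"
      using inj that by (auto dest: inj_onD)
    then show ?thesis using True unfolding lag_def by (intro trans[OF prod.neutral]) auto
  next
    case False
    then have "k \<in> {..n}-{j}" using that by auto
    then have "\<exists>i\<in>{..n}-{j}. (c k - c i) / (c j - c i) = 0" by (intro bexI[of _ k]) auto
    then show ?thesis using False unfolding lag_def by (subst prod_zero) auto
  qed
  have "q = Q"
  proof (rule poly_eqI_degree[where A = "c ` {..n}"])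
    fix x assume "x \<in> c ` {..n}"
    then obtain k where k: "k \<le> n" "x = c k" by auto
    have "poly Q x = (\<Sum>j\<le>n. poly q (c j) * (if k = j then 1 else 0))"
      unfolding Q_def using k by (simp add: poly_sum polyL lagk)
    also have "\<dots> = poly q x" using k by (simp add: if_distrib cong: if_cong)
    finally show "poly q x = poly Q x" by simp
  next
    have "card (c ` {..n}) = Suc n" using inj by (simp add: card_image)
    then show "degree q < card (c ` {..n})" "degree Q < card (c ` {..n})" using deg degQ by auto
  qed
  then have "poly q y = poly Q y" by simp
  also have "\<dots> = (\<Sum>j\<le>n. poly q (c j) * lag c n j y)" unfolding Q_def poly_sum by (simp add: polyL)
  finally show ?thesis .
qed

lemma lag_sign:
  fixes c :: "nat \<Rightarrow> real"
  assumes dec: "\<And>i k. i < k \<Longrightarrow> k \<le> n \<Longrightarrow> c k < c i"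
    and y: "\<And>i. i \<le> n \<Longrightarrow> c i \<le> y" and j: "j \<le> n"
  shows "0 \<le> (-1)^j * lag c n j y"
proof -
  define f where "f i = (y - c i) / (c j - c i)" for i
  have split: "{..n}-{j} = {..<j} \<union> {j<..n}" using j by auto
  have "lag c n j y = prod f {..<j} * prod f {j<..n}"
    unfolding lag_def f_def[symmetric] split by (subst prod.union_disjoint) auto
  moreover have "prod f {..<j} = (-1)^j * (\<Prod>i<j. - f i)"
    by (simp add: prod_uminus)
  moreover have "0 \<le> (\<Prod>i<j. - f i)"
  proof (rule prod_nonneg)
    fix i assume "i \<in> {..<j}"
    then have "c j < c i" "c i \<le> y" using dec y j by auto
    then show "0 \<le> - f i" unfolding f_def by (simp add: divide_simps)
  qed
  moreover have "0 \<le> prod f {j<..n}"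
  proof (rule prod_nonneg)
    fix i assume "i \<in> {j<..n}"
    then have "c i < c j" "c i \<le> y" using dec y j by auto
    then show "0 \<le> f i" unfolding f_def by (simp add: divide_simps)
  qed
  ultimately show ?thesis by (simp add: mult.assoc[symmetric])
qed

lemma cheb_growth:
  fixes q :: "real poly"
  assumes deg: "degree q \<le> n" and n: "1 \<le> n"
    and bd: "\<And>y. -1 \<le> y \<Longrightarrow> y \<le> 1 \<Longrightarrow> \<bar>poly q y\<bar> \<le> M"
  shows "\<bar>poly q (cosh u)\<bar> \<le> M * cosh (real n * u)"
proof -
  define c where "c j = cos (real j * pi / real n)" for j
  have npos: "0 < real n" using n by simp
  have dec: "c k < c i" if "i < k" "k \<le> n" for i k
  proof -
    have "real i * pi < real k * pi" using that pi_gt_zero by (intro mult_strict_right_mono) auto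
    then have h1: "real i * pi / real n < real k * pi / real n" using npos by (rule divide_strict_right_mono)
    have "real k * pi \<le> real n * pi" using that pi_gt_zero by (intro mult_right_mono) auto
    then have h2: "real k * pi / real n \<le> pi" using npos by (simp add: pos_divide_le_eq mult.commute)
    have h3: "0 \<le> real i * pi / real n" by simp
    have "cos (real k * pi / real n) < cos (real i * pi / real n)" using h1 h2 h3 by (intro cos_monotone_0_pi) auto
    then show ?thesis unfolding c_def .
  qed
  have inj: "inj_on c {..n}"
  proof (rule inj_onI)
    fix i k assume "i \<in> {..n}" "k \<in> {..n}" "c i = c k"
    then show "i = k" using dec[of i k] dec[of k i] by (cases i k rule: linorder_cases) auto
  qed
  have y: "c i \<le> cosh u" for i
    unfolding c_def using cos_le_one[of "real i * pi / real n"] cosh_real_ge_1[of u] by linarith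
  have cj: "poly (cheb n) (c j) = (-1)^j" for j
  proof -
    have "poly (cheb n) (c j) = cos (real n * (real j * pi / real n))" by (simp add: c_def cheb_cos)
    also have "\<dots> = cos (real j * pi)" using n by simp
    finally show ?thesis by simp
  qed
  have absl: "\<bar>lag c n j (cosh u)\<bar> = (-1)^j * lag c n j (cosh u)" if "j \<le> n" for j
  proof -
    have s: "0 \<le> (-1)^j * lag c n j (cosh u)" by (rule lag_sign[OF dec y that])
    show ?thesis
    proof (cases "even j")
      case True
      then have "(-1::real)^j = 1" by simp
      then show ?thesis using s by simp
    next
      case False
      then have "(-1::real)^j = -1" by simp
      then show ?thesis using s by simp
    qed
  qed
  have e0: "\<bar>poly q (cosh u)\<bar> = \<bar>\<Sum>j\<le>n. poly q (c j) * lag c n j (cosh u)\<bar>"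
    using lagrange_interp[OF inj deg, of "cosh u"] by (rule arg_cong)
  have e1: "\<bar>\<Sum>j\<le>n. poly q (c j) * lag c n j (cosh u)\<bar> \<le> (\<Sum>j\<le>n. \<bar>poly q (c j) * lag c n j (cosh u)\<bar>)"
    by (rule sum_abs)
  have e2: "(\<Sum>j\<le>n. \<bar>poly q (c j) * lag c n j (cosh u)\<bar>) \<le> (\<Sum>j\<le>n. M * ((-1)^j * lag c n j (cosh u)))"
  proof (rule sum_mono)
    fix j assume j: "j \<in> {..n}"
    have "\<bar>poly q (c j)\<bar> \<le> M" unfolding c_def by (rule bd) auto
    moreover have "\<bar>poly q (c j) * lag c n j (cosh u)\<bar> = \<bar>poly q (c j)\<bar> * ((-1)^j * lag c n j (cosh u))"
      using absl[of j] j by (simp only: abs_mult) simp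
    moreover have "0 \<le> (-1)^j * lag c n j (cosh u)" using absl[of j] j by (metis abs_ge_zero atMost_iff)
    ultimately show "\<bar>poly q (c j) * lag c n j (cosh u)\<bar> \<le> M * ((-1)^j * lag c n j (cosh u))"
      by (metis mult_right_mono)
  qed
  have e3: "(\<Sum>j\<le>n. M * ((-1)^j * lag c n j (cosh u))) = M * (\<Sum>j\<le>n. poly (cheb n) (c j) * lag c n j (cosh u))"
    unfolding cj by (rule sum_distrib_left[symmetric])
  have e4: "(\<Sum>j\<le>n. poly (cheb n) (c j) * lag c n j (cosh u)) = cosh (real n * u)"
    using lagrange_interp[OF inj cheb_deg, of "cosh u"] cheb_cosh[of n u] by (rule subst)
  have "\<bar>poly q (cosh u)\<bar> \<le> (\<Sum>j\<le>n. M * ((-1)^j * lag c n j (cosh u)))"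
    using e0 e1 e2 by linarith
  also have "\<dots> = M * cosh (real n * u)" using e3 e4 by simp
  finally show ?thesis .
qed



lemma cosh_ge_quad: "1 + x^2/2 \<le> cosh (x::real)"
proof -
  let ?f = "\<lambda>n. if even n then x ^ n /\<^sub>R fact n else 0"
  have s: "?f sums cosh x" by (rule cosh_converges)
  have "sum ?f {..<3} \<le> suminf ?f"
    by (rule sum_le_suminf) (use s sums_summable in auto)
  moreover have "sum ?f {..<3} = 1 + x^2/2" by (simp add: eval_nat_numeral)
  ultimately show ?thesis using sums_unique[OF s] by simp
qed

lemma w_bound:
  fixes w \<delta> :: real
  assumes d: "0 < \<delta>" "\<delta> < 1/4" and w: "1 \<le> w"
    and h: "1 - 3*\<delta>/2 < 3*\<delta>/2 * ((w + 1/w)/2)"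
  shows "17 / (24*\<delta>) \<le> w"
proof (rule ccontr)
  define a where "a = 17 / (24*\<delta>)"
  define v where "v = 1/\<delta>"
  have v4: "v > 4" using d by (simp add: v_def field_simps)
  have av: "a = 17 * v/24" by (simp add: a_def v_def)
  assume "\<not> 17 / (24*\<delta>) \<le> w"
  then have wa: "w < a" by (simp add: a_def)
  have a1: "a \<ge> 1" using av v4 by simp
  have "w + 1/w - (a + 1/a) = (w - a) * (a*w - 1) / (a*w)"
    using w a1 by (simp add: field_simps)
  also have "\<dots> \<le> 0"
  proof -
    have aw: "1 \<le> a*w" using mult_mono[of 1 a 1 w] a1 w by simp
    show ?thesis using wa aw by (intro divide_nonpos_pos mult_nonpos_nonneg) auto
  qed
  finally have "w + 1/w \<le> a + 1/a" by simp
  moreover have "1/a \<le> 6/17" using av v4 by (simp add: field_simps)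
  moreover have "4 * v/3 - 2 < w + 1/w"
  proof -
    have "(1 - 3*\<delta>/2) * (4 * v/3) < (3*\<delta>/2 * ((w + 1/w)/2)) * (4 * v/3)"
      using h v4 by (intro mult_strict_right_mono) auto
    moreover have "(1 - 3*\<delta>/2) * (4 * v/3) = 4 * v/3 - 2" using d by (simp add: v_def field_simps)
    moreover have "(3*\<delta>/2 * ((w + 1/w)/2)) * (4 * v/3) = (w + 1/w) * (\<delta> * v)" by (simp add: field_simps)
    moreover have "\<delta> * v = 1" using d by (simp add: v_def)
    ultimately show ?thesis by (metis mult_1_right)
  qed
  ultimately show False using av v4 by linarith
qed

lemma main_bound:
  fixes p :: "real poly" and \<delta> B :: real
  assumes d: "0 < \<delta>" "\<delta> < 1/4" and BL: "ln (1/\<delta>) < B" and deg: "0 < degree p"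
    and appr: "\<And>x. 0 \<le> x \<Longrightarrow> x \<le> B \<Longrightarrow> \<bar>poly p x - exp (-x)\<bar> < \<delta>"
  shows "sqrt (ln (1/(2*\<delta>))) * sqrt (B - ln (1/\<delta>)) / 2 \<le> real (degree p)"
proof -
  define L where "L = ln (1/\<delta>)"
  define n where "n = degree p"
  have L0: "0 < L" using d by (simp add: L_def)
  have expL: "exp (-L) = \<delta>" using d by (simp add: L_def ln_div)
  define h where "h = (B - L)/2"
  define m0 where "m0 = (B + L)/2"
  have h0: "0 < h" using BL by (simp add: h_def L_def)
  define q where "q = pcompose p [:m0, -h:] - [:\<delta>/2:]"
  have degq: "degree q \<le> n"
  proof -
    have d1: "degree [:m0, -h:] \<le> 1" by (simp add: degree_pCons_le)
    have "degree (pcompose p [:m0, -h:]) \<le> degree p * degree [:m0, -h:]" by (rule degree_pcompose_le)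
    also have "\<dots> \<le> degree p * 1" using d1 by (rule mult_left_mono) simp
    finally have "degree (pcompose p [:m0, -h:]) \<le> n" by (simp add: n_def)
    then show ?thesis unfolding q_def by (intro degree_diff_le) simp_all
  qed
  have polyq: "poly q y = poly p (m0 - h*y) - \<delta>/2" for y
    by (simp add: q_def poly_pcompose algebra_simps)
  have bd: "\<bar>poly q y\<bar> \<le> 3*\<delta>/2" if "-1 \<le> y" "y \<le> 1" for y
  proof -
    define x where "x = m0 - h*y"
    have hy1: "h*y \<le> h" using mult_left_mono[of y 1 h] that h0 by simp
    have hy2: "-h \<le> h*y" using mult_left_mono[of "-1" y h] that h0 by simp
    have mh: "m0 - h = L" "m0 + h = B" by (simp_all add: m0_def h_def field_simps)
    have xL: "L \<le> x" unfolding x_def using hy1 mh by linarith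
    have xB: "x \<le> B" unfolding x_def using hy2 mh by linarith
    have "\<bar>poly p x - exp (-x)\<bar> < \<delta>" using appr xB xL L0 by auto
    moreover have "exp (-x) \<le> \<delta>" using xL expL by auto
    moreover have "0 < exp (-x)" by simp
    ultimately have "\<bar>poly p x - \<delta>/2\<bar> \<le> 3*\<delta>/2" unfolding abs_less_iff abs_le_iff by linarith
    then show ?thesis unfolding polyq x_def[symmetric] .
  qed
  define y0 where "y0 = m0 / h"
  have y0: "y0 = 1 + 2*L/(B-L)" using h0 by (simp add: y0_def m0_def h_def field_simps)
  have y01: "1 \<le> y0" using y0 L0 h0 by (simp add: h_def)
  define u where "u = arcosh y0"
  have cu: "cosh u = y0" using y01 by (simp add: u_def)
  have u0: "0 \<le> u" using y01 by (simp add: u_def)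
  have n1: "1 \<le> n" using deg by (simp add: n_def)
  have cg: "\<bar>poly q (cosh u)\<bar> \<le> 3*\<delta>/2 * cosh (real n * u)"
    by (rule cheb_growth[OF degq n1]) (rule bd)
  have "poly q (cosh u) = poly p 0 - \<delta>/2" using h0 by (simp add: cu polyq y0_def)
  moreover have "1 - \<delta> < poly p 0" using appr[of 0] BL L0 by (auto simp: L_def)
  ultimately have key: "1 - 3*\<delta>/2 < 3*\<delta>/2 * cosh (real n * u)" using cg by linarith
  define w where "w = exp (real n * u)"
  have w1: "1 \<le> w" using u0 by (simp add: w_def)
  have ce: "cosh (real n * u) = (w + 1/w)/2" by (simp add: w_def cosh_def exp_minus field_simps)
  have key2: "1 - 3*\<delta>/2 < 3*\<delta>/2 * ((w + 1/w)/2)" using key unfolding ce .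
  have "17 / (24*\<delta>) \<le> w" by (rule w_bound[OF d w1 key2])
  then have nu: "ln (17 / (24*\<delta>)) \<le> real n * u"
    using d by (metis w_def ln_exp ln_le_cancel_iff exp_gt_zero divide_pos_pos mult_pos_pos zero_less_numeral)
  define s where "s = 2 * sqrt (L/(B-L))"
  have s0: "0 \<le> s" using h0 L0 by (simp add: s_def h_def)
  have "s^2 = 4 * (L/(B-L))" using h0 L0 by (simp add: s_def power_mult_distrib h_def)
  then have "s^2/2 = 2*L/(B-L)" using h0 by (simp add: h_def field_simps)
  then have "cosh u \<le> cosh s" using cosh_ge_quad[of s] cu y0 by linarith
  then have us: "u \<le> s" using u0 s0 cosh_real_nonneg_le_iff by blast
  have "ln (17 / (24*\<delta>)) \<le> real n * s" using nu us by (meson mult_left_mono of_nat_0_le_iff order_trans)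
  define b where "b = ln (1/(2*\<delta>))"
  have b0: "0 < b" using d by (simp add: b_def)
  have bL: "b = L - ln 2" using d by (simp add: b_def L_def ln_div ln_mult)
  have "ln (17/24::real) \<ge> - ln 2 / 2"
  proof -
    have "ln (1/2::real) \<le> ln ((17/24)^2)" by (subst ln_le_cancel_iff) (auto simp: power2_eq_square)
    then show ?thesis by (simp add: ln_div ln_realpow)
  qed
  then have "(L + b)/2 \<le> ln (17 / (24*\<delta>))" using d bL by (simp add: L_def ln_div ln_mult)
  moreover have "sqrt (L*b) \<le> (L + b)/2" using arith_geo_mean_sqrt[of L b] L0 b0 by simp
  ultimately have A: "sqrt L * sqrt b \<le> real n * s" using \<open>ln (17 / (24*\<delta>)) \<le> real n * s\<close>
    by (simp add: real_sqrt_mult)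
  have sL: "s = 2 * sqrt L / sqrt (B - L)" by (simp add: s_def real_sqrt_divide)
  have BL0: "0 < sqrt (B - L)" using h0 by (simp add: h_def)
  have "sqrt L * sqrt b * sqrt (B - L) \<le> real n * 2 * sqrt L"
    using mult_right_mono[OF A, of "sqrt (B - L)"] BL0 by (simp add: sL)
  then have "sqrt b * sqrt (B - L) \<le> real n * 2" using L0 by (simp add: mult.commute mult.left_commute)
  then show ?thesis by (simp add: b_def L_def n_def)
qed



lemma rpf_poly: "real_polynomial_function (g :: real \<Rightarrow> real) \<Longrightarrow> \<exists>p. \<forall>x. g x = poly p x"
proof (induction rule: real_polynomial_function.induct)
  case (linear f)
  then interpret bounded_linear f .
  have "f x = poly [:0, f 1:] x" for x
  proof -
    have "f x = f (x *\<^sub>R 1)" by simp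
    also have "\<dots> = x *\<^sub>R f 1" by (rule scaleR)
    finally show ?thesis by simp
  qed
  then show ?case by blast
next
  case (const c)
  have "\<forall>x. c = poly [:c:] x" by simp
  then show ?case by blast
next
  case (add f g)
  then obtain p q where "\<forall>x. f x = poly p x" "\<forall>x. g x = poly q x" by blast
  then have "\<forall>x. f x + g x = poly (p + q) x" by simp
  then show ?case by blast
next
  case (mult f g)
  then obtain p q where "\<forall>x. f x = poly p x" "\<forall>x. g x = poly q x" by blast
  then have "\<forall>x. f x * g x = poly (p * q) x" by simp
  then show ?case by blast
qed

lemma exists_approx:
  fixes \<delta> B :: real
  assumes d: "0 < \<delta>" and B: "0 \<le> B"
  shows "\<exists>p :: real poly. 0 < degree p \<and> (SUP x\<in>{0..B}. \<bar>poly p x - exp (- x)\<bar>) < \<delta>"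
proof -
  have cont: "continuous_on {0..B} (\<lambda>x::real. exp (-x))" by (intro continuous_intros)
  obtain g where g: "real_polynomial_function g" "\<And>x. x \<in> {0..B} \<Longrightarrow> \<bar>exp (-x) - g x\<bar> < \<delta>/2"
    using Stone_Weierstrass_real_polynomial_function[OF compact_Icc cont, of "\<delta>/2"] d by auto
  obtain p0 where p0: "\<And>x. g x = poly p0 x" using rpf_poly[OF g(1)] by blast
  define k where "k = Suc (degree p0)"
  define \<epsilon> where "\<epsilon> = \<delta> / (4 * (B^k + 1))"
  have Bk: "0 \<le> B^k" using B by simp
  have e0: "0 < \<epsilon>" using d Bk by (simp add: \<epsilon>_def)
  define p where "p = p0 + monom \<epsilon> k"
  have degp: "degree p = k"
    unfolding p_def using e0 by (subst degree_add_eq_right) (auto simp: degree_monom_eq k_def)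
  have eB: "\<epsilon> * B^k \<le> \<delta>/4"
  proof -
    have "\<epsilon> * B^k \<le> \<epsilon> * (B^k + 1)" using e0 by simp
    also have "\<dots> = \<delta>/4" using Bk by (simp add: \<epsilon>_def field_simps)
    finally show ?thesis .
  qed
  have pt: "\<bar>poly p x - exp (-x)\<bar> \<le> 3*\<delta>/4" if "x \<in> {0..B}" for x
  proof -
    have x: "0 \<le> x" "x \<le> B" using that by auto
    have "\<epsilon> * x^k \<le> \<epsilon> * B^k" using x e0 by (intro mult_left_mono power_mono) auto
    moreover have "0 \<le> \<epsilon> * x^k" using x e0 by simp
    moreover have "\<bar>exp (-x) - poly p0 x\<bar> < \<delta>/2" using g(2)[OF that] p0 by simp
    moreover have "poly p x = poly p0 x + \<epsilon> * x^k" by (simp add: p_def poly_monom)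
    ultimately show ?thesis using eB by (simp only: abs_le_iff abs_less_iff) linarith
  qed
  have "(SUP x\<in>{0..B}. \<bar>poly p x - exp (- x)\<bar>) \<le> 3*\<delta>/4"
    using B pt by (intro cSUP_least) auto
  then have "(SUP x\<in>{0..B}. \<bar>poly p x - exp (- x)\<bar>) < \<delta>" using d by linarith
  moreover have "0 < degree p" by (simp add: degp k_def)
  ultimately show ?thesis by blast
qed

lemma le_sup:
  fixes p :: "real poly"
  assumes "x \<in> {0..B}"
  shows "\<bar>poly p x - exp (- x)\<bar> \<le> (SUP x\<in>{0..B}. \<bar>poly p x - exp (- x)\<bar>)"
proof -
  have "continuous_on {0..B} (\<lambda>x. \<bar>poly p x - exp (- x)\<bar>)" by (intro continuous_intros)
  then have "bounded ((\<lambda>x. \<bar>poly p x - exp (- x)\<bar>) ` {0..B})"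
    by (intro compact_imp_bounded compact_continuous_image) auto
  then have "bdd_above ((\<lambda>x. \<bar>poly p x - exp (- x)\<bar>) ` {0..B})" by (rule bounded_imp_bdd_above)
  then show ?thesis using assms by (rule cSUP_upper2) simp
qed

lemma degree_bound:
  fixes \<delta> B :: real
  assumes d: "0 < \<delta>" "\<delta> < 1/4" and BL: "ln (1/\<delta>) < B"
  shows "sqrt (ln (1/(2*\<delta>))) * sqrt (B - ln (1/\<delta>)) / 2 \<le> real (approx_degree B \<delta> (\<lambda>x. exp (-x)))"
proof -
  have L0: "0 < ln (1/\<delta>)" using d by simp
  have ex: "\<exists>n. \<exists>p :: real poly. degree p = n \<and> 0 < degree p \<and>
        (SUP x\<in>{0..B}. \<bar>poly p x - exp (- x)\<bar>) < \<delta>"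
    using exists_approx[OF d(1), of B] BL L0 by auto
  obtain p :: "real poly" where p: "degree p = approx_degree B \<delta> (\<lambda>x. exp (-x))" "0 < degree p"
     "(SUP x\<in>{0..B}. \<bar>poly p x - exp (- x)\<bar>) < \<delta>"
    using LeastI_ex[OF ex] unfolding approx_degree_def by blast
  have appr: "\<bar>poly p x - exp (-x)\<bar> < \<delta>" if "0 \<le> x" "x \<le> B" for x
    using le_sup[of x B p] that p(3) by auto
  show ?thesis using main_bound[OF d BL p(2) appr] p(1) by simp
qed



theorem lemma4p6:
  fixes B \<delta> :: "nat \<Rightarrow> real"
  assumes "\<And>k. k \<ge> 1 \<Longrightarrow> 0 < \<delta> k \<and> \<delta> k < 1/4"
    and "\<And>k. k \<ge> 1 \<Longrightarrow> B k \<ge> 1"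
    and "filterlim (\<lambda>k. B k / ln (1 / \<delta> k)) at_top sequentially"
  shows "\<exists>\<epsilon> :: nat \<Rightarrow> real. \<epsilon> \<longlonglongrightarrow> 0 \<and>
    (\<forall>\<^sub>F k in sequentially.
       real (approx_degree (B k) (\<delta> k) (\<lambda>x. exp (- x)))
         \<ge> (1/2 + \<epsilon> k) * sqrt (B k * ln (1 / (2 * \<delta> k))))"
proof -
  define L where "L k = ln (1 / \<delta> k)" for k
  define \<epsilon> where "\<epsilon> k = (sqrt (max 0 (1 - L k / B k)) - 1) / 2" for k
  have LB: "(\<lambda>k. L k / B k) \<longlonglongrightarrow> 0"
  proof -
    have "(\<lambda>k. inverse (B k / L k)) \<longlonglongrightarrow> 0"
      using assms(3) unfolding L_def by (rule tendsto_inverse_0_at_top)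
    then show ?thesis by simp
  qed
  have "(\<lambda>k. (sqrt (max 0 (1 - L k / B k)) - 1) / 2) \<longlonglongrightarrow> (sqrt (max 0 (1 - 0)) - 1) / 2"
    by (intro tendsto_intros LB) auto
  then have lim: "\<epsilon> \<longlonglongrightarrow> 0" by (simp add: \<epsilon>_def[abs_def])
  have ev1: "\<forall>\<^sub>F k in sequentially. 1 < B k / L k"
    using assms(3) unfolding L_def filterlim_at_top_dense by blast
  have ev2: "\<forall>\<^sub>F k in sequentially. 1 \<le> k" by (rule eventually_ge_at_top)
  have "\<forall>\<^sub>F k in sequentially.
       real (approx_degree (B k) (\<delta> k) (\<lambda>x. exp (- x)))
         \<ge> (1/2 + \<epsilon> k) * sqrt (B k * ln (1 / (2 * \<delta> k)))"
    using ev1 ev2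
  proof eventually_elim
    case (elim k)
    have d: "0 < \<delta> k" "\<delta> k < 1/4" using assms(1) elim(2) by auto
    have B1: "1 \<le> B k" using assms(2) elim(2) by auto
    have L0: "0 < L k" using d by (simp add: L_def)
    have BL: "L k < B k" using elim(1) L0 by (simp add: field_simps)
    have b0: "0 < ln (1 / (2 * \<delta> k))" using d by simp
    have "max 0 (1 - L k / B k) = 1 - L k / B k" using BL B1 by (simp add: field_simps)
    then have e: "1/2 + \<epsilon> k = sqrt (1 - L k / B k) / 2" by (simp add: \<epsilon>_def field_simps)
    have "sqrt (1 - L k / B k) * sqrt (B k) = sqrt (B k - L k)"
      using B1 by (simp add: real_sqrt_mult[symmetric] field_simps)
    then have "(1/2 + \<epsilon> k) * sqrt (B k * ln (1 / (2 * \<delta> k)))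
        = sqrt (ln (1/(2*\<delta> k))) * sqrt (B k - L k) / 2"
      unfolding e by (simp add: real_sqrt_mult algebra_simps)
    also have "\<dots> \<le> real (approx_degree (B k) (\<delta> k) (\<lambda>x. exp (- x)))"
      using degree_bound[OF d, of "B k"] BL by (simp add: L_def)
    finally show ?case .
  qed
  then show ?thesis using lim by blast
qed


end
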